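(* Let $G$ be a group with identity $e$, $A$ a finite set, $S\subseteq G$ finite with $e\in S$. Suppose $(\mathcal P,f)$ generates a local map $\mu:A^S\to A$, with $f$ well-behaved, $|S|\ge2$ and $|A|\ge3$. Then $e$ is essential for $\mu$.
   Context: $A^S$ is the set of functions $S\to A$. For $s\in S$, $\mathrm{Res}_s(z)=z|_{S\setminus\{s\}}$. An element $s\in S$ is essential for $\mu$ if there exist $z,w\in A^S$ with $\mathrm{Res}_s(z)=\mathrm{Res}_s(w)$ but $\mu(z)\neq\mu(w)$. The pair $(\mathcal P,f)$ generates $\mu$ if $\mathcal P=\{z\in A^S:\mu(z)\neq z(e)\}$ and $f:\mathcal P\to A$ is the restriction of $\mu$ to $\mathcal P$. The function $f$ is well-behaved if for all $p,q\in\mathcal P$: $p(e)=q(e)$ if and only if $f(p)=f(q)$. *)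

theory Defs
  imports "HOL-Algebra.Group" "HOL-Library.FuncSet"
begin

definition Res :: "'g set \<Rightarrow> 'g \<Rightarrow> ('g \<Rightarrow> 'a) \<Rightarrow> ('g \<Rightarrow> 'a)" where
  "Res S s z = restrict z (S - {s})"

definition essential :: "'g set \<Rightarrow> 'a set \<Rightarrow> (('g \<Rightarrow> 'a) \<Rightarrow> 'a) \<Rightarrow> 'g \<Rightarrow> bool" where
  "essential S A \<mu> s \<longleftrightarrow> s \<in> S \<and>
     (\<exists>z \<in> S \<rightarrow>\<^sub>E A. \<exists>w \<in> S \<rightarrow>\<^sub>E A. Res S s z = Res S s w \<and> \<mu> z \<noteq> \<mu> w)"

definition generates :: "'g set \<Rightarrow> 'a set \<Rightarrow> 'g \<Rightarrow> ('g \<Rightarrow> 'a) set \<Rightarrow> (('g \<Rightarrow> 'a) \<Rightarrow> 'a)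
    \<Rightarrow> (('g \<Rightarrow> 'a) \<Rightarrow> 'a) \<Rightarrow> bool" where
  "generates S A e P f \<mu> \<longleftrightarrow>
     P = {z \<in> S \<rightarrow>\<^sub>E A. \<mu> z \<noteq> z e} \<and> (\<forall>p \<in> P. f p = \<mu> p)"

definition well_behaved :: "'g \<Rightarrow> ('g \<Rightarrow> 'a) set \<Rightarrow> (('g \<Rightarrow> 'a) \<Rightarrow> 'a) \<Rightarrow> bool" where
  "well_behaved e P f \<longleftrightarrow> (\<forall>p \<in> P. \<forall>q \<in> P. p e = q e \<longleftrightarrow> f p = f q)"

end

theory Submission
  imports Defs
begin

lemma three_avoid:
  assumes "finite A" "card A \<ge> 3"
  shows "\<exists>a\<in>A. a \<noteq> b \<and> a \<noteq> c"
proof (rule ccontr)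
  assume "\<not> ?thesis"
  then have "A \<subseteq> {b, c}" by auto
  then have "card A \<le> card {b, c}" by (intro card_mono) auto
  also have "\<dots> \<le> 2" by (simp add: card_insert_if)
  finally show False using assms by simp
qed

lemma upd_in: "z \<in> S \<rightarrow>\<^sub>E A \<Longrightarrow> a \<in> A \<Longrightarrow> e \<in> S \<Longrightarrow> z(e := a) \<in> S \<rightarrow>\<^sub>E A"
  by (auto simp: PiE_def Pi_def extensional_def)

lemma upd_res: "Res S e (z(e := a)) = Res S e z"
  by (auto simp: Res_def restrict_def)

theorem mainTheorem5:
  fixes G :: "('g, 'b) monoid_scheme" and A :: "'a set" and S :: "'g set"
    and \<mu> :: "('g \<Rightarrow> 'a) \<Rightarrow> 'a" and P :: "('g \<Rightarrow> 'a) set" and f :: "('g \<Rightarrow> 'a) \<Rightarrow> 'a"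
  assumes "group G"
    and "finite A"
    and "S \<subseteq> carrier G" and "finite S" and "\<one>\<^bsub>G\<^esub> \<in> S"
    and "\<mu> \<in> (S \<rightarrow>\<^sub>E A) \<rightarrow> A"
    and "generates S A \<one>\<^bsub>G\<^esub> P f \<mu>"
    and "well_behaved \<one>\<^bsub>G\<^esub> P f"
    and "card S \<ge> 2" and "card A \<ge> 3"
  shows "essential S A \<mu> \<one>\<^bsub>G\<^esub>"
proof (rule ccontr)
  define e where "e = \<one>\<^bsub>G\<^esub>"
  have eS: "e \<in> S" using assms(5) e_def by simp
  have P: "P = {z \<in> S \<rightarrow>\<^sub>E A. \<mu> z \<noteq> z e}" and fP: "\<forall>p\<in>P. f p = \<mu> p"
    using assms(7) unfolding generates_def e_def by auto
  have wb: "\<forall>p\<in>P. \<forall>q\<in>P. p e = q e \<longleftrightarrow> f p = f q"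
    using assms(8) unfolding well_behaved_def e_def by auto
  assume "\<not> essential S A \<mu> \<one>\<^bsub>G\<^esub>"
  then have ne: "\<And>z w. z \<in> S \<rightarrow>\<^sub>E A \<Longrightarrow> w \<in> S \<rightarrow>\<^sub>E A \<Longrightarrow> Res S e z = Res S e w \<Longrightarrow> \<mu> z = \<mu> w"
    using eS unfolding essential_def e_def by blast
  have upd: "\<And>z a. z \<in> S \<rightarrow>\<^sub>E A \<Longrightarrow> a \<in> A \<Longrightarrow> \<mu> (z(e := a)) = \<mu> z"
    using ne upd_in upd_res eS by metis
  have "A \<noteq> {}" using assms(10) by auto
  then obtain a0 where a0: "a0 \<in> A" by auto
  define z0 :: "'g \<Rightarrow> 'a" where "z0 = (\<lambda>x. if x \<in> S then a0 else undefined)"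
  have z0: "z0 \<in> S \<rightarrow>\<^sub>E A" using a0 by (auto simp: z0_def)
  have "\<exists>p. p \<in> P"
  proof (cases "\<mu> z0 = z0 e")
    case True
    obtain a where a: "a \<in> A" "a \<noteq> z0 e" using three_avoid[OF assms(2) assms(10)] by blast
    have "z0(e := a) \<in> P" using True a upd[OF z0 a(1)] upd_in[OF z0 a(1) eS] P by auto
    then show ?thesis by blast
  next
    case False
    then show ?thesis using z0 P by blast
  qed
  then obtain p where p: "p \<in> P" by blast
  have pS: "p \<in> S \<rightarrow>\<^sub>E A" using p P by auto
  obtain a1 where a1: "a1 \<in> A" "a1 \<noteq> \<mu> p" using three_avoid[OF assms(2) assms(10)] by blast
  obtain a2 where a2: "a2 \<in> A" "a2 \<noteq> \<mu> p" "a2 \<noteq> a1" using three_avoid[OF assms(2) assms(10)] by blast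
  have q1: "p(e := a1) \<in> P" using a1 upd[OF pS a1(1)] upd_in[OF pS a1(1) eS] P by auto
  have q2: "p(e := a2) \<in> P" using a2 upd[OF pS a2(1)] upd_in[OF pS a2(1) eS] P by auto
  have "f (p(e := a1)) = f (p(e := a2))"
    using fP q1 q2 upd[OF pS a1(1)] upd[OF pS a2(1)] by simp
  then have "a1 = a2" using wb q1 q2 by fastforce
  then show False using a2 by simp
qed

end
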